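(* Let $C=(C_1,\dots,C_m)$ be a quantum circuit with canonical form $G$, whose vertices are $G_1,\dots,G_m$ with $G_k$ corresponding to gate $C_k$. For any indices $1\le i<j\le m$, the following are equivalent: (1) $[i,j]_C=0$; (2) $G_j$ is not a successor of $G_i$ in $G$, i.e., there is no directed path from $G_i$ to $G_j$ in $G$.
   Context: A gate is a unitary operation acting on a specified ordered list of qubits; we identify it with the unitary it induces on the full $n$-qubit space. Two gates $A,B$ commute if their unitaries satisfy $[A,B]=AB-BA=0$. A circuit is a finite sequence of gates $(C_1,\dots,C_m)$ (applied left to right). A pairwise commutation move replaces two adjacent gates whose unitaries commute by the same two gates in swapped order. For indices $i,j$, we write $[i,j]_C=0$ if and only if $i=j$, or there is a finite sequence of pairwise commutation moves applied to $C$ after which the gate originally at position $j$ comes before the gate originally at position $i$ (for $i<j$; symmetrically for $j<i$). The canonical form of $C$ is the directed graph built as follows: start with the empty graph; for $t=1,\dots,m$: mark every vertex already in the graph as "reachable"; add vertex $G_t$; then for $s=t-1,t-2,\dots,1$ in this order, if $G_s$ is marked reachable and $[C_s,C_t]\neq 0$, add a directed edge $G_s\to G_t$ and mark every predecessor of $G_s$ (every vertex from which there is a directed path to $G_s$ in the current graph) as not reachable. *)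

theory Defs
  imports "Jordan_Normal_Form.Schur_Decomposition"
begin

(* A gate on n qubits, identified with the unitary it induces on the full
   2^n-dimensional space. *)
definition is_unitary_gate :: "nat \<Rightarrow> complex mat \<Rightarrow> bool" where
  "is_unitary_gate n U \<longleftrightarrow> U \<in> carrier_mat (2^n) (2^n) \<and> U * mat_adjoint U = 1\<^sub>m (2^n)"

(* A circuit: finite sequence of gates, 0-indexed positions *)
definition is_circuit :: "nat \<Rightarrow> complex mat list \<Rightarrow> bool" where
  "is_circuit n C \<longleftrightarrow> (\<forall>U\<in>set C. is_unitary_gate n U)"

definition commutes :: "complex mat \<Rightarrow> complex mat \<Rightarrow> bool" where
  "commutes A B \<longleftrightarrow> A * B = B * A"

(* An arrangement of the circuit is a list p of original positions; p ! k is the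
   original index of the gate currently at position k. *)
definition comm_move :: "complex mat list \<Rightarrow> nat list \<Rightarrow> nat list \<Rightarrow> bool" where
  "comm_move C p q \<longleftrightarrow> (\<exists>k. Suc k < length p \<and> commutes (C ! (p ! k)) (C ! (p ! Suc k))
      \<and> q = p[k := p ! Suc k, Suc k := p ! k])"

definition comm_zero :: "complex mat list \<Rightarrow> nat \<Rightarrow> nat \<Rightarrow> bool" where
  "comm_zero C i j \<longleftrightarrow> i = j \<or>
     (\<exists>p. (comm_move C)\<^sup>*\<^sup>* [0..<length C] p \<and>
        (if i < j then (\<exists>a b. a < b \<and> b < length p \<and> p ! a = j \<and> p ! b = i)
                  else (\<exists>a b. a < b \<and> b < length p \<and> p ! a = i \<and> p ! b = j)))"

(* Canonical form: vertex k corresponds to gate C ! k; the graph is its edge set.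
   One step of the inner loop for new vertex t at candidate s; state (E, R)
   with R the set of vertices currently marked reachable. *)
definition canon_step :: "complex mat list \<Rightarrow> nat \<Rightarrow> nat \<Rightarrow> (nat \<times> nat) set \<times> nat set
    \<Rightarrow> (nat \<times> nat) set \<times> nat set" where
  "canon_step C t s ER = (let (E, R) = ER in
     if s \<in> R \<and> \<not> commutes (C ! s) (C ! t)
     then (let E' = insert (s, t) E in (E', R - {u. (u, s) \<in> E'\<^sup>+}))
     else (E, R))"

definition canon_add :: "complex mat list \<Rightarrow> nat \<Rightarrow> (nat \<times> nat) set \<Rightarrow> (nat \<times> nat) set" where
  "canon_add C t E = fst (fold (canon_step C t) (rev [0..<t]) (E, {0..<t}))"

definition canon_edges :: "complex mat list \<Rightarrow> (nat \<times> nat) set" where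
  "canon_edges C = fold (canon_add C) [0..<length C] {}"

end

theory Submission
  imports Defs
begin

definition depD :: "complex mat list \<Rightarrow> (nat \<times> nat) set" where
  "depD C = {(x,y). x < y \<and> y < length C \<and> \<not> commutes (C!x) (C!y)}"

definition before :: "nat list \<Rightarrow> nat \<Rightarrow> nat \<Rightarrow> bool" where
  "before p x y \<longleftrightarrow> (\<exists>a b. a < b \<and> b < length p \<and> p ! a = x \<and> p ! b = y)"

lemma upt_split3: "a \<le> b \<Longrightarrow> b \<le> c \<Longrightarrow> [a..<c] = [a..<b] @ [b..<c]"
  by (metis le_add_diff_inverse upt_add_eq_append)

lemma commutes_sym: "commutes A B \<Longrightarrow> commutes B A"
  by (simp add: commutes_def)

lemma canon_step_eq:
  "canon_step C t s (E, R) = (if s \<in> R \<and> \<not> commutes (C ! s) (C ! t)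
     then (insert (s, t) E, R - {u. (u, s) \<in> (insert (s,t) E)\<^sup>+}) else (E, R))"
  by (simp add: canon_step_def Let_def)

lemma inner_inv:
  assumes "set ss \<subseteq> {..<t}" "distinct ss"
    and "\<forall>s. s < t \<and> \<not> commutes (C!s) (C!t) \<and> s \<notin> set ss \<longrightarrow> (s,t) \<in> E'\<^sup>+"
    and "\<forall>s. s \<in> set ss \<and> s \<notin> R \<longrightarrow> (s,t) \<in> E'\<^sup>+"
  shows "E' \<subseteq> fst (fold (canon_step C t) ss (E', R)) \<and>
         fst (fold (canon_step C t) ss (E', R)) \<subseteq> E' \<union> {(s,t') . t' = t \<and> s < t \<and> \<not> commutes (C!s) (C!t)} \<and>
         (\<forall>s. s < t \<and> \<not> commutes (C!s) (C!t) \<longrightarrow> (s,t) \<in> (fst (fold (canon_step C t) ss (E', R)))\<^sup>+)"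
  using assms
proof (induction ss arbitrary: E' R)
  case Nil
  then show ?case by auto
next
  case (Cons s ss)
  show ?case
  proof (cases "s \<in> R \<and> \<not> commutes (C ! s) (C ! t)")
    case True
    define E'' where "E'' = insert (s,t) E'"
    define R' where "R' = R - {u. (u, s) \<in> E''\<^sup>+}"
    have st: "canon_step C t s (E', R) = (E'', R')"
      using True by (simp add: canon_step_eq E''_def R'_def)
    have mono: "E'\<^sup>+ \<subseteq> E''\<^sup>+" unfolding E''_def by (rule trancl_mono_subset) auto
    have h3: "\<forall>x. x < t \<and> \<not> commutes (C!x) (C!t) \<and> x \<notin> set ss \<longrightarrow> (x,t) \<in> E''\<^sup>+"
      using Cons.prems(3) mono by (auto simp: E''_def)
    have h4: "\<forall>x. x \<in> set ss \<and> x \<notin> R' \<longrightarrow> (x,t) \<in> E''\<^sup>+"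
    proof (intro allI impI)
      fix x assume x: "x \<in> set ss \<and> x \<notin> R'"
      show "(x,t) \<in> E''\<^sup>+"
      proof (cases "x \<in> R")
        case False then show ?thesis using Cons.prems(4) x mono by auto
      next
        case True
        then have "(x,s) \<in> E''\<^sup>+" using x by (auto simp: R'_def)
        moreover have "(s,t) \<in> E''\<^sup>+" by (auto simp: E''_def)
        ultimately show ?thesis by (meson trancl_trans)
      qed
    qed
    have IH: "E'' \<subseteq> fst (fold (canon_step C t) ss (E'', R')) \<and>
         fst (fold (canon_step C t) ss (E'', R')) \<subseteq> E'' \<union> {(s,t') . t' = t \<and> s < t \<and> \<not> commutes (C!s) (C!t)} \<and>
         (\<forall>s. s < t \<and> \<not> commutes (C!s) (C!t) \<longrightarrow> (s,t) \<in> (fst (fold (canon_step C t) ss (E'', R')))\<^sup>+)"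
      using Cons.IH[of E'' R'] Cons.prems(1,2) h3 h4 by auto
    have "s < t" using Cons.prems(1) by auto
    then show ?thesis using IH st True by (auto simp: E''_def)
  next
    case False
    have st: "canon_step C t s (E', R) = (E', R)"
      using False by (auto simp: canon_step_eq)
    have h3: "\<forall>x. x < t \<and> \<not> commutes (C!x) (C!t) \<and> x \<notin> set ss \<longrightarrow> (x,t) \<in> E'\<^sup>+"
      using Cons.prems(3,4) False by auto
    have IH: "E' \<subseteq> fst (fold (canon_step C t) ss (E', R)) \<and>
         fst (fold (canon_step C t) ss (E', R)) \<subseteq> E' \<union> {(s,t') . t' = t \<and> s < t \<and> \<not> commutes (C!s) (C!t)} \<and>
         (\<forall>s. s < t \<and> \<not> commutes (C!s) (C!t) \<longrightarrow> (s,t) \<in> (fst (fold (canon_step C t) ss (E', R)))\<^sup>+)"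
      using Cons.IH[of E' R] Cons.prems h3 by auto
    then show ?thesis using st by simp
  qed
qed

lemma canon_add_props:
  "E \<subseteq> canon_add C t E \<and>
   canon_add C t E \<subseteq> E \<union> {(s,t') . t' = t \<and> s < t \<and> \<not> commutes (C!s) (C!t)} \<and>
   (\<forall>s. s < t \<and> \<not> commutes (C!s) (C!t) \<longrightarrow> (s,t) \<in> (canon_add C t E)\<^sup>+)"
  unfolding canon_add_def
  by (rule inner_inv) auto

lemma outer_inv:
  assumes "t \<le> length C"
  shows "fold (canon_add C) [0..<t] {} \<subseteq> depD C \<and>
         (\<forall>x y. (x,y) \<in> depD C \<and> y < t \<longrightarrow> (x,y) \<in> (fold (canon_add C) [0..<t] {})\<^sup>+)"
  using assms
proof (induction t)
  case 0
  then show ?case by simp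
next
  case (Suc t)
  define E where "E = fold (canon_add C) [0..<t] {}"
  have eq: "fold (canon_add C) [0..<Suc t] {} = canon_add C t E" by (simp add: E_def)
  have IH: "E \<subseteq> depD C \<and> (\<forall>x y. (x,y) \<in> depD C \<and> y < t \<longrightarrow> (x,y) \<in> E\<^sup>+)"
    using Suc by (simp add: E_def)
  note P = canon_add_props[of E C t]
  have 1: "canon_add C t E \<subseteq> depD C"
    using P IH Suc.prems by (auto simp: depD_def)
  have mono: "E\<^sup>+ \<subseteq> (canon_add C t E)\<^sup>+" using P by (meson trancl_mono_subset)
  have 2: "\<forall>x y. (x,y) \<in> depD C \<and> y < Suc t \<longrightarrow> (x,y) \<in> (canon_add C t E)\<^sup>+"
  proof (intro allI impI)
    fix x y assume h: "(x,y) \<in> depD C \<and> y < Suc t"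
    show "(x,y) \<in> (canon_add C t E)\<^sup>+"
    proof (cases "y < t")
      case True then show ?thesis using IH h mono by auto
    next
      case False then have "y = t" using h by auto
      then show ?thesis using P h by (auto simp: depD_def)
    qed
  qed
  show ?case using 1 2 eq by simp
qed

lemma canon_trancl: "(canon_edges C)\<^sup>+ = (depD C)\<^sup>+"
proof -
  note O = outer_inv[of "length C" C, OF order_refl]
  have a: "canon_edges C \<subseteq> depD C" using O by (simp add: canon_edges_def)
  have b: "depD C \<subseteq> (canon_edges C)\<^sup>+" using O by (auto simp: canon_edges_def depD_def)
  show ?thesis
  proof
    show "(canon_edges C)\<^sup>+ \<subseteq> (depD C)\<^sup>+" using a by (rule trancl_mono_subset)
    show "(depD C)\<^sup>+ \<subseteq> (canon_edges C)\<^sup>+"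
      using trancl_mono_subset[OF b] by simp
  qed
qed

lemma swap_move:
  assumes "commutes (C!x) (C!y)"
  shows "comm_move C (u @ x # y # v) (u @ y # x # v)"
  unfolding comm_move_def
  apply (rule exI[of _ "length u"])
  using assms by (auto simp: nth_append list_update_append)

lemma move_left:
  assumes "\<forall>z\<in>set w. commutes (C!z) (C!y)"
  shows "(comm_move C)\<^sup>*\<^sup>* (u @ w @ y # v) (u @ y # w @ v)"
  using assms
proof (induction w arbitrary: v rule: rev_induct)
  case Nil then show ?case by simp
next
  case (snoc z w)
  have "comm_move C ((u @ w) @ z # y # v) ((u @ w) @ y # z # v)"
    by (rule swap_move) (use snoc.prems in auto)
  then have 1: "(comm_move C)\<^sup>*\<^sup>* (u @ (w @ [z]) @ y # v) (u @ w @ y # z # v)" by simp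
  have 2: "(comm_move C)\<^sup>*\<^sup>* (u @ w @ y # z # v) (u @ y # w @ z # v)"
    using snoc.IH[of "z # v"] snoc.prems by auto
  show ?case using 1 2 by simp
qed

lemma sort_part:
  assumes "\<forall>xs ys. L = xs @ ys \<longrightarrow> (\<forall>a\<in>set xs. \<forall>b\<in>set ys. a \<in> A \<and> b \<notin> A \<longrightarrow> commutes (C!a) (C!b))"
  shows "(comm_move C)\<^sup>*\<^sup>* (u @ L @ v) (u @ filter (\<lambda>x. x \<notin> A) L @ filter (\<lambda>x. x \<in> A) L @ v)"
  using assms
proof (induction L arbitrary: v rule: rev_induct)
  case Nil then show ?case by simp
next
  case (snoc y L)
  have h: "\<forall>xs ys. L = xs @ ys \<longrightarrow> (\<forall>a\<in>set xs. \<forall>b\<in>set ys. a \<in> A \<and> b \<notin> A \<longrightarrow> commutes (C!a) (C!b))"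
    using snoc.prems by (metis append.assoc set_append Un_iff)
  have 1: "(comm_move C)\<^sup>*\<^sup>* (u @ L @ y # v) (u @ filter (\<lambda>x. x \<notin> A) L @ filter (\<lambda>x. x \<in> A) L @ y # v)"
    using snoc.IH[OF h, of "y # v"] by simp
  show ?case
  proof (cases "y \<in> A")
    case True then show ?thesis using 1 by simp
  next
    case False
    have c: "\<forall>z\<in>set (filter (\<lambda>x. x \<in> A) L). commutes (C!z) (C!y)"
      using snoc.prems False by auto
    have 2: "(comm_move C)\<^sup>*\<^sup>* ((u @ filter (\<lambda>x. x \<notin> A) L) @ filter (\<lambda>x. x \<in> A) L @ y # v)
        ((u @ filter (\<lambda>x. x \<notin> A) L) @ y # filter (\<lambda>x. x \<in> A) L @ v)"
      by (rule move_left[OF c])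
    show ?thesis using 1 2 False by simp
  qed
qed

lemma before_append:
  assumes "x \<in> set xs" "y \<in> set ys"
  shows "before (xs @ ys) x y"
proof -
  obtain a where a: "a < length xs" "xs ! a = x" using assms(1) by (auto simp: in_set_conv_nth)
  obtain b where b: "b < length ys" "ys ! b = y" using assms(2) by (auto simp: in_set_conv_nth)
  show ?thesis unfolding before_def
    by (rule exI[of _ a], rule exI[of _ "length xs + b"]) (use a b in \<open>auto simp: nth_append\<close>)
qed

definition invP where
  "invP C p \<longleftrightarrow> distinct p \<and> (\<forall>x y. (x,y) \<in> depD C \<longrightarrow> before p x y)"

lemma inv_step:
  assumes "comm_move C p q" "invP C p"
  shows "invP C q"
proof -
  obtain k where k: "Suc k < length p" "commutes (C ! (p ! k)) (C ! (p ! Suc k))"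
    "q = p[k := p ! Suc k, Suc k := p ! k]" using assms(1) by (auto simp: comm_move_def)
  have dq: "distinct q" using assms(2) k by (simp add: invP_def distinct_swap)
  define sg where "sg = (\<lambda>a::nat. if a = k then Suc k else if a = Suc k then k else a)"
  have qn: "\<And>a. a < length p \<Longrightarrow> q ! (sg a) = p ! a"
    using k by (auto simp: sg_def nth_list_update)
  have lq: "length q = length p" using k by simp
  have "before q x y" if xy: "(x,y) \<in> depD C" for x y
  proof -
    have "before p x y" using assms(2) xy by (simp add: invP_def)
    then obtain a b where ab: "a < b" "b < length p" "p ! a = x" "p ! b = y"
      unfolding before_def by blast
    have nc: "\<not> commutes (C!x) (C!y)" using xy by (auto simp: depD_def)
    have "\<not> (a = k \<and> b = Suc k)" using nc k ab by auto
    then have "sg a < sg b" using ab unfolding sg_def by auto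
    moreover have "sg b < length q" using ab k lq by (auto simp: sg_def)
    ultimately show ?thesis unfolding before_def
      using qn ab by (intro exI[of _ "sg a"] exI[of _ "sg b"]) auto
  qed
  then show ?thesis using dq by (simp add: invP_def)
qed

lemma inv_steps:
  assumes "(comm_move C)\<^sup>*\<^sup>* p q" "invP C p"
  shows "invP C q"
  using assms by (induction rule: rtranclp_induct) (auto intro: inv_step)

lemma before_trans:
  assumes "distinct p" "before p x y" "before p y z"
  shows "before p x z"
  using assms unfolding before_def
  by (metis nth_eq_iff_index_eq order.strict_trans)

lemma before_asym:
  assumes "distinct p" "before p x y" "before p y x"
  shows False
  using assms unfolding before_def
  by (metis nth_eq_iff_index_eq order.strict_trans order.irrefl)

lemma inv_trancl:
  assumes "invP C p" "(x,y) \<in> (depD C)\<^sup>+"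
  shows "before p x y"
  using assms(2)
proof (induction rule: trancl_induct)
  case (base y) then show ?case using assms(1) by (auto simp: invP_def)
next
  case (step y z)
  then show ?case using assms(1) before_trans by (auto simp: invP_def)
qed

lemma inv_init: "invP C [0..<length C]"
proof -
  have "before [0..<length C] x y" if "(x,y) \<in> depD C" for x y
    unfolding before_def using that
    by (intro exI[of _ x] exI[of _ y]) (auto simp: depD_def)
  then show ?thesis by (simp add: invP_def)
qed

theorem mainTheorem2:
  fixes n :: nat and C :: "complex mat list" and i j :: nat
  assumes "is_circuit n C"
    and "i < j" and "j < length C"
  shows "comm_zero C i j \<longleftrightarrow> (i, j) \<notin> (canon_edges C)\<^sup>+"
proof -
  have cz: "comm_zero C i j \<longleftrightarrow> (\<exists>p. (comm_move C)\<^sup>*\<^sup>* [0..<length C] p \<and> before p j i)"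
    using assms(2) unfolding comm_zero_def before_def by simp
  have "(\<exists>p. (comm_move C)\<^sup>*\<^sup>* [0..<length C] p \<and> before p j i) \<longleftrightarrow> (i, j) \<notin> (depD C)\<^sup>+"
  proof
    assume "\<exists>p. (comm_move C)\<^sup>*\<^sup>* [0..<length C] p \<and> before p j i"
    then obtain p where p: "(comm_move C)\<^sup>*\<^sup>* [0..<length C] p" "before p j i" by blast
    have ip: "invP C p" using inv_steps[OF p(1) inv_init] .
    show "(i, j) \<notin> (depD C)\<^sup>+"
    proof
      assume "(i, j) \<in> (depD C)\<^sup>+"
      then have "before p i j" using inv_trancl ip by blast
      then show False using before_asym p(2) ip by (auto simp: invP_def)
    qed
  next
    assume nr: "(i, j) \<notin> (depD C)\<^sup>+"
    define A where "A = {k. (i,k) \<in> (depD C)\<^sup>*}"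
    define L where "L = [i..<Suc j]"
    have split: "[0..<length C] = [0..<i] @ L @ [Suc j..<length C]"
    proof -
      have "[0..<length C] = [0..<i] @ [i..<length C]" using assms by (intro upt_split3) auto
      also have "[i..<length C] = [i..<Suc j] @ [Suc j..<length C]" using assms by (intro upt_split3) auto
      finally show ?thesis by (simp add: L_def)
    qed
    have hyp: "\<forall>xs ys. L = xs @ ys \<longrightarrow> (\<forall>a\<in>set xs. \<forall>b\<in>set ys. a \<in> A \<and> b \<notin> A \<longrightarrow> commutes (C!a) (C!b))"
    proof (intro allI impI ballI)
      fix xs ys a b assume L: "L = xs @ ys" and a: "a \<in> set xs" and b: "b \<in> set ys"
        and ab: "a \<in> A \<and> b \<notin> A"
      have "sorted_wrt (<) L" unfolding L_def by (rule sorted_wrt_upt)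
      then have "sorted_wrt (<) (xs @ ys)" using L by simp
      then have "a < b" using a b by (simp add: sorted_wrt_append)
      moreover have "b \<in> set L" using b L by simp
      then have "b < length C" using assms(3) unfolding L_def by auto
      ultimately have "\<not> commutes (C!a) (C!b) \<Longrightarrow> (a,b) \<in> depD C"
        unfolding depD_def by simp
      moreover have "(i,a) \<in> (depD C)\<^sup>*" using ab by (simp add: A_def)
      ultimately show "commutes (C!a) (C!b)"
        using ab unfolding A_def by (meson mem_Collect_eq rtrancl.rtrancl_into_rtrancl)
    qed
    define p where "p = [0..<i] @ filter (\<lambda>x. x \<notin> A) L @ filter (\<lambda>x. x \<in> A) L @ [Suc j..<length C]"
    have mv: "(comm_move C)\<^sup>*\<^sup>* [0..<length C] p"
      unfolding split p_def by (rule sort_part[OF hyp])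
    have jn: "j \<notin> A" using nr assms(2) by (auto simp: A_def rtrancl_eq_or_trancl)
    have iA: "i \<in> A" by (simp add: A_def)
    have "before (([0..<i] @ filter (\<lambda>x. x \<notin> A) L) @ (filter (\<lambda>x. x \<in> A) L @ [Suc j..<length C])) j i"
      by (rule before_append) (use jn iA assms(2) in \<open>auto simp: L_def\<close>)
    then show "\<exists>p. (comm_move C)\<^sup>*\<^sup>* [0..<length C] p \<and> before p j i"
      using mv by (auto simp: p_def)
  qed
  then show ?thesis using cz canon_trancl by simp
qed

end
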